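(* Let $V$ be a finite dimensional vector space over a field $\mathbb{K}$ of characteristic zero, and let $z$ be an element of $V\setminus\{0\}$ or of $\wedge^2V\setminus\{0\}$. Then $$\{a\in\widehat T:\ [z,a]\in\widehat L\}=\widehat L+\mathbb{K}[[z]].$$
   Context: $\widehat T=\prod_{m\ge0}V^{\otimes m}$ is the completed tensor algebra and $\widehat L\subset\widehat T$ the completed free Lie algebra on $V$; $\wedge^2V$ is viewed inside $V^{\otimes 2}$ as antisymmetric tensors; $\mathbb{K}[[z]]\subset\widehat T$ is the set of series $\sum_kc_kz^k$, $c_k\in\mathbb{K}$. *)

theory Defs
  imports Main
begin

text \<open>V = K^B with basis indexed by the finite type 'b. An element of the completed
tensor algebra is a noncommutative formal power series: a function from words
(lists of basis indices) to coefficients; words of length m index the standard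
basis of V^{tensor m}.\<close>

type_synonym ('a, 'b) ser = "'b list \<Rightarrow> 'a"

definition ser_zero :: "('a::zero, 'b) ser" where
  "ser_zero = (\<lambda>w. 0)"

definition ser_one :: "('a::{zero,one}, 'b) ser" where
  "ser_one = (\<lambda>w. if w = [] then 1 else 0)"

definition ser_add :: "('a::plus, 'b) ser \<Rightarrow> ('a, 'b) ser \<Rightarrow> ('a, 'b) ser" where
  "ser_add a b = (\<lambda>w. a w + b w)"

definition ser_smul :: "'a::times \<Rightarrow> ('a, 'b) ser \<Rightarrow> ('a, 'b) ser" where
  "ser_smul c a = (\<lambda>w. c * a w)"

definition ser_mul :: "('a::comm_ring_1, 'b) ser \<Rightarrow> ('a, 'b) ser \<Rightarrow> ('a, 'b) ser" where
  "ser_mul a b = (\<lambda>w. \<Sum>i\<le>length w. a (take i w) * b (drop i w))"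

definition ser_pow :: "('a::comm_ring_1, 'b) ser \<Rightarrow> nat \<Rightarrow> ('a, 'b) ser" where
  "ser_pow z k = ((ser_mul z) ^^ k) ser_one"

definition ser_bracket :: "('a::comm_ring_1, 'b) ser \<Rightarrow> ('a, 'b) ser \<Rightarrow> ('a, 'b) ser" where
  "ser_bracket a b = (\<lambda>w. ser_mul a b w - ser_mul b a w)"

definition letter :: "'b \<Rightarrow> ('a::{zero,one}, 'b) ser" where
  "letter i = (\<lambda>w. if w = [i] then 1 else 0)"

text \<open>Lie polynomials: the Lie subalgebra of the (uncompleted) tensor algebra
generated by V, i.e. the free Lie algebra on V.\<close>
inductive_set lie_polys :: "('a::comm_ring_1, 'b) ser set" where
  lp_letter: "letter i \<in> lie_polys"
| lp_zero: "ser_zero \<in> lie_polys"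
| lp_add: "a \<in> lie_polys \<Longrightarrow> b \<in> lie_polys \<Longrightarrow> ser_add a b \<in> lie_polys"
| lp_smul: "a \<in> lie_polys \<Longrightarrow> ser_smul c a \<in> lie_polys"
| lp_bracket: "a \<in> lie_polys \<Longrightarrow> b \<in> lie_polys \<Longrightarrow> ser_bracket a b \<in> lie_polys"

definition homog :: "nat \<Rightarrow> ('a::zero, 'b) ser \<Rightarrow> ('a, 'b) ser" where
  "homog m a = (\<lambda>w. if length w = m then a w else 0)"

definition Lhat :: "('a::comm_ring_1, 'b) ser set" where
  "Lhat = {a. \<forall>m. homog m a \<in> lie_polys}"

text \<open>K[[z]] = { sum_k c_k z^k }.  For z of positive degree, z^k is supported on
words of length \<ge> k, so the coefficient of w only involves k \<le> length w.\<close>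
definition power_series_in :: "('a::comm_ring_1, 'b) ser \<Rightarrow> ('a, 'b) ser set" where
  "power_series_in z = {(\<lambda>w. \<Sum>k\<le>length w. c k * ser_pow z k w) | c :: nat \<Rightarrow> 'a. True}"

definition nonzero_in_V :: "('a::zero, 'b) ser \<Rightarrow> bool" where
  "nonzero_in_V z \<longleftrightarrow> (\<forall>w. length w \<noteq> 1 \<longrightarrow> z w = 0) \<and> z \<noteq> ser_zero"

definition nonzero_in_wedge2 :: "('a::ab_group_add, 'b) ser \<Rightarrow> bool" where
  "nonzero_in_wedge2 z \<longleftrightarrow> (\<forall>w. length w \<noteq> 2 \<longrightarrow> z w = 0) \<and>
     (\<forall>i j. z [i, j] = - z [j, i]) \<and> z \<noteq> ser_zero"

end

theory Submission
  imports Defs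
begin

definition hom :: "nat \<Rightarrow> ('a::zero,'b) ser \<Rightarrow> bool" where
  "hom d a \<longleftrightarrow> (\<forall>w. length w \<noteq> d \<longrightarrow> a w = 0)"

lemma ser_mul_assoc:
  fixes a b c :: "('a::comm_ring_1,'b) ser"
  shows "ser_mul (ser_mul a b) c = ser_mul a (ser_mul b c)"
proof (rule ext)
  fix w :: "'b list"
  define n where "n = length w"
  define G where "G j k = a (take j w) * b (take k (drop j w)) * c (drop (j+k) w)" for j k
  have "ser_mul (ser_mul a b) c w = (\<Sum>i\<le>n. \<Sum>j\<le>i. G j (i - j))"
    unfolding ser_mul_def n_def[symmetric]
    by (intro sum.cong refl) (auto simp: sum_distrib_right G_def n_def min_def take_drop add.commute)
  also have "\<dots> = (\<Sum>(j,k)\<in>{(j,k). j + k \<le> n}. G j k)"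
    by (rule sum.triangle_reindex_eq[symmetric])
  also have "{(j,k). j + k \<le> n} = Sigma {..n} (\<lambda>j. {..n-j})" by auto
  also have "(\<Sum>(j,k)\<in>Sigma {..n} (\<lambda>j. {..n-j}). G j k) = (\<Sum>j\<le>n. \<Sum>k\<le>n-j. G j k)"
    by (rule sum.Sigma[symmetric]) auto
  also have "\<dots> = ser_mul a (ser_mul b c) w"
    unfolding ser_mul_def n_def[symmetric]
    by (intro sum.cong refl) (auto simp: sum_distrib_left G_def n_def mult.assoc add.commute)
  finally show "ser_mul (ser_mul a b) c w = ser_mul a (ser_mul b c) w" .
qed

lemma hom_mul_left:
  fixes a b :: "('a::comm_ring_1,'b) ser"
  assumes "hom p a"
  shows "ser_mul a b w = (if p \<le> length w then a (take p w) * b (drop p w) else 0)"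
proof -
  have "ser_mul a b w = (\<Sum>i\<le>length w. if i = p then a (take i w) * b (drop i w) else 0)"
    unfolding ser_mul_def using assms by (intro sum.cong refl) (auto simp: hom_def min_def)
  then show ?thesis by (simp add: sum.delta)
qed

lemma hom_mul_right:
  fixes a b :: "('a::comm_ring_1,'b) ser"
  assumes "hom q b"
  shows "ser_mul a b w = (if q \<le> length w then a (take (length w - q) w) * b (drop (length w - q) w) else 0)"
proof -
  have "ser_mul a b w = (\<Sum>i\<le>length w. if i = length w - q then
          (if q \<le> length w then a (take i w) * b (drop i w) else 0) else 0)"
    unfolding ser_mul_def using assms by (intro sum.cong refl) (auto simp: hom_def)
  then show ?thesis by (simp add: sum.delta)
qed

lemma hom_mul:
  fixes a b :: "('a::comm_ring_1,'b) ser"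
  assumes "hom p a" "hom q b"
  shows "ser_mul a b w = (if length w = p + q then a (take p w) * b (drop p w) else 0)"
  using assms(2) unfolding hom_mul_left[OF assms(1)] hom_def by auto

lemma hom_mul_hom:
  fixes a b :: "('a::comm_ring_1,'b) ser"
  assumes "hom p a" "hom q b"
  shows "hom (p+q) (ser_mul a b)"
  unfolding hom_def using hom_mul[OF assms] by auto

lemma hom_bracket:
  fixes a b :: "('a::comm_ring_1,'b) ser"
  assumes "hom p a" "hom q b"
  shows "hom (p+q) (ser_bracket a b)"
  using hom_mul_hom[OF assms] hom_mul_hom[OF assms(2,1)]
  unfolding hom_def ser_bracket_def by (auto simp: add.commute)

lemma ser_mul_LC_right:
  fixes a :: "('a::comm_ring_1,'b) ser"
  shows "ser_mul a (\<lambda>w. \<Sum>v\<in>S. co v * g v w) = (\<lambda>w. \<Sum>v\<in>S. co v * ser_mul a (g v) w)"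
  unfolding ser_mul_def sum_distrib_left
  by (rule ext, subst sum.swap) (simp add: mult_ac)

lemma ser_mul_LC_left:
  fixes a :: "('a::comm_ring_1,'b) ser"
  shows "ser_mul (\<lambda>w. \<Sum>v\<in>S. co v * g v w) a = (\<lambda>w. \<Sum>v\<in>S. co v * ser_mul (g v) a w)"
  unfolding ser_mul_def sum_distrib_left sum_distrib_right
  by (rule ext, subst sum.swap) (simp add: mult_ac)

lemma ser_bracket_LC_right:
  fixes a :: "('a::comm_ring_1,'b) ser"
  shows "ser_bracket a (\<lambda>w. \<Sum>v\<in>S. co v * g v w) = (\<lambda>w. \<Sum>v\<in>S. co v * ser_bracket a (g v) w)"
  unfolding ser_bracket_def ser_mul_LC_right ser_mul_LC_left
  by (simp add: sum_subtractf right_diff_distrib)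

lemma ser_bracket_LC_left:
  fixes a :: "('a::comm_ring_1,'b) ser"
  shows "ser_bracket (\<lambda>w. \<Sum>v\<in>S. co v * g v w) a = (\<lambda>w. \<Sum>v\<in>S. co v * ser_bracket (g v) a w)"
  unfolding ser_bracket_def ser_mul_LC_right ser_mul_LC_left
  by (simp add: sum_subtractf right_diff_distrib)

lemma ser_mul_diff_left:
  fixes a b c :: "('a::comm_ring_1,'b) ser"
  shows "ser_mul (\<lambda>w. a w - b w) c = (\<lambda>w. ser_mul a c w - ser_mul b c w)"
  by (rule ext) (simp add: ser_mul_def algebra_simps sum_subtractf)

lemma ser_mul_diff_right:
  fixes a b c :: "('a::comm_ring_1,'b) ser"
  shows "ser_mul c (\<lambda>w. a w - b w) = (\<lambda>w. ser_mul c a w - ser_mul c b w)"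
  by (rule ext) (simp add: ser_mul_def algebra_simps sum_subtractf)

lemma ser_mul_add_left:
  fixes a b c :: "('a::comm_ring_1,'b) ser"
  shows "ser_mul (\<lambda>w. a w + b w) c = (\<lambda>w. ser_mul a c w + ser_mul b c w)"
  by (rule ext) (simp add: ser_mul_def algebra_simps sum.distrib)

lemma ser_mul_add_right:
  fixes a b c :: "('a::comm_ring_1,'b) ser"
  shows "ser_mul c (\<lambda>w. a w + b w) = (\<lambda>w. ser_mul c a w + ser_mul c b w)"
  by (rule ext) (simp add: ser_mul_def algebra_simps sum.distrib)

lemma ser_mul_smul_left:
  fixes a c :: "('a::comm_ring_1,'b) ser"
  shows "ser_mul (\<lambda>w. x * a w) c = (\<lambda>w. x * ser_mul a c w)"
  by (rule ext) (simp add: ser_mul_def algebra_simps sum_distrib_left)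

lemma ser_mul_smul_right:
  fixes a c :: "('a::comm_ring_1,'b) ser"
  shows "ser_mul c (\<lambda>w. x * a w) = (\<lambda>w. x * ser_mul c a w)"
  by (rule ext) (simp add: ser_mul_def algebra_simps sum_distrib_left)

lemma ser_mul_zero_left: "ser_mul (\<lambda>w. 0) c = (\<lambda>w. (0::'a::comm_ring_1))"
  by (rule ext) (simp add: ser_mul_def)

lemma ser_mul_zero_right: "ser_mul c (\<lambda>w. 0) = (\<lambda>w. (0::'a::comm_ring_1))"
  by (rule ext) (simp add: ser_mul_def)

lemma jacobi:
  fixes a b c :: "('a::comm_ring_1,'b) ser"
  shows "ser_bracket (ser_bracket a b) c = (\<lambda>w. ser_bracket a (ser_bracket b c) w - ser_bracket b (ser_bracket a c) w)"
  unfolding ser_bracket_def ser_mul_diff_left ser_mul_diff_right ser_mul_assoc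
  by (rule ext) (simp add: algebra_simps)

inductive hl :: "nat \<Rightarrow> ('a::comm_ring_1,'b) ser \<Rightarrow> bool" where
  hl_letter: "hl 1 (letter i)"
| hl_zero: "hl n ser_zero"
| hl_add: "hl n a \<Longrightarrow> hl n b \<Longrightarrow> hl n (ser_add a b)"
| hl_smul: "hl n a \<Longrightarrow> hl n (ser_smul c a)"
| hl_br: "hl p a \<Longrightarrow> hl q b \<Longrightarrow> hl (p+q) (ser_bracket a b)"

lemma hl_hom: "hl n a \<Longrightarrow> hom n a"
proof (induction rule: hl.induct)
  case (hl_letter i) then show ?case by (auto simp: hom_def letter_def)
next
  case (hl_zero n) then show ?case by (auto simp: hom_def ser_zero_def)
next
  case (hl_add n a b) then show ?case by (auto simp: hom_def ser_add_def)
next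
  case (hl_smul n a c) then show ?case by (auto simp: hom_def ser_smul_def)
next
  case (hl_br p a q b) then show ?case by (intro hom_bracket hl_br.IH)
qed

lemma hl_lie: "hl n a \<Longrightarrow> a \<in> lie_polys"
  by (induction rule: hl.induct) (auto intro: lie_polys.intros)

lemma hl_zero': "hl n (\<lambda>w. 0)"
  using hl_zero unfolding ser_zero_def .

lemma hl_LC:
  assumes "finite S" "\<And>v. v \<in> S \<Longrightarrow> hl n (g v)"
  shows "hl n (\<lambda>w. \<Sum>v\<in>S. co v * g v w)"
  using assms
proof (induction S rule: finite_induct)
  case empty then show ?case by (simp add: hl_zero')
next
  case (insert x F)
  have "(\<lambda>w. \<Sum>v\<in>insert x F. co v * g v w) = ser_add (ser_smul (co x) (g x)) (\<lambda>w. \<Sum>v\<in>F. co v * g v w)"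
    using insert by (auto simp: ser_add_def ser_smul_def)
  then show ?case using insert by (auto intro!: hl_add hl_smul)
qed

lemma hl_0: "hl n a \<Longrightarrow> n = 0 \<Longrightarrow> a = ser_zero"
proof (induction rule: hl.induct)
  case (hl_br p a q b)
  then show ?case by (auto simp: ser_bracket_def ser_zero_def ser_mul_zero_left ser_mul_zero_right)
qed (auto simp: ser_zero_def ser_add_def ser_smul_def)

lemma hl_sum:
  fixes g :: "'v \<Rightarrow> ('a::comm_ring_1,'b) ser"
  assumes "finite S" "\<And>v. v \<in> S \<Longrightarrow> hl n (g v)"
  shows "hl n (\<lambda>w. \<Sum>v\<in>S. g v w)"
  using hl_LC[OF assms, where co = "\<lambda>_. 1"] by simp

lemma hom_homog: "hom n (homog n a)"
  by (simp add: hom_def homog_def)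

lemma homog_mul:
  fixes a b :: "('a::comm_ring_1,'b) ser"
  shows "homog n (ser_mul a b) = (\<lambda>w. \<Sum>i\<le>n. ser_mul (homog i a) (homog (n-i) b) w)"
proof (rule ext)
  fix w :: "'b list"
  have "(\<Sum>i\<le>n. ser_mul (homog i a) (homog (n-i) b) w)
      = (\<Sum>i\<le>n. if length w = n then a (take i w) * b (drop i w) else 0)"
    by (intro sum.cong refl, subst hom_mul[OF hom_homog hom_homog]) (auto simp: homog_def)
  also have "\<dots> = homog n (ser_mul a b) w"
    by (simp add: homog_def ser_mul_def)
  finally show "homog n (ser_mul a b) w = (\<Sum>i\<le>n. ser_mul (homog i a) (homog (n-i) b) w)" ..
qed

lemma homog_bracket:
  fixes a b :: "('a::comm_ring_1,'b) ser"
  shows "homog n (ser_bracket a b) = (\<lambda>w. \<Sum>i\<le>n. ser_bracket (homog i a) (homog (n-i) b) w)"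
proof -
  have "homog n (ser_bracket a b) = (\<lambda>w. homog n (ser_mul a b) w - homog n (ser_mul b a) w)"
    by (auto simp: homog_def ser_bracket_def)
  also have "(\<lambda>w. \<Sum>i\<le>n. ser_mul (homog (n-i) b) (homog i a) w) = (\<lambda>w. \<Sum>i\<le>n. ser_mul (homog i b) (homog (n-i) a) w)"
    by (rule ext, rule sum.reindex_bij_witness[of _ "\<lambda>i. n - i" "\<lambda>i. n - i"]) auto
  then have "homog n (ser_mul b a) = (\<lambda>w. \<Sum>i\<le>n. ser_mul (homog (n-i) b) (homog i a) w)"
    by (simp add: homog_mul)
  finally show ?thesis
    by (simp add: homog_mul ser_bracket_def sum_subtractf)
qed

lemma lie_homog: "p \<in> lie_polys \<Longrightarrow> hl n (homog n p)"
proof (induction arbitrary: n rule: lie_polys.induct)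
  case (lp_letter i)
  show ?case
  proof (cases "n = 1")
    case True
    have "homog n (letter i) = letter i" using True by (auto simp: homog_def letter_def)
    then show ?thesis using True hl_letter by metis
  next
    case False
    have "homog n (letter i) = ser_zero" using False by (auto simp: homog_def letter_def ser_zero_def)
    then show ?thesis using hl_zero by metis
  qed
next
  case lp_zero
  have "homog n ser_zero = ser_zero" by (auto simp: homog_def ser_zero_def)
  then show ?case using hl_zero by metis
next
  case (lp_add a b)
  have "homog n (ser_add a b) = ser_add (homog n a) (homog n b)" by (auto simp: homog_def ser_add_def)
  then show ?case using lp_add hl_add by metis
next
  case (lp_smul a c)
  have "homog n (ser_smul c a) = ser_smul c (homog n a)" by (auto simp: homog_def ser_smul_def)
  then show ?case using lp_smul hl_smul by metis
next
  case (lp_bracket a b)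
  have "hl n (ser_bracket (homog i a) (homog (n-i) b))" if "i \<in> {..n}" for i
    using hl_br[OF lp_bracket.IH(1)[of i] lp_bracket.IH(2)[of "n-i"]] that by simp
  then show ?case unfolding homog_bracket by (intro hl_sum) auto
qed

fun adw :: "'b list \<Rightarrow> ('a::comm_ring_1,'b) ser \<Rightarrow> ('a,'b) ser" where
  "adw [] c = c"
| "adw (i#u) c = ser_bracket (letter i) (adw u c)"

lemma adw_append: "adw (u@v) c = adw u (adw v c)"
  by (induction u) auto

lemma adw_LC: "adw u (\<lambda>w. \<Sum>v\<in>S. co v * g v w) = (\<lambda>w. \<Sum>v\<in>S. co v * adw u (g v) w)"
  by (induction u) (auto simp: ser_bracket_LC_right)

lemma bracket_smul_right:
  fixes a c :: "('a::comm_ring_1,'b) ser"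
  shows "ser_bracket a (\<lambda>w. x * c w) = (\<lambda>w. x * ser_bracket a c w)"
  unfolding ser_bracket_def ser_mul_smul_left ser_mul_smul_right by (simp add: algebra_simps)

lemma bracket_smul_left:
  fixes a c :: "('a::comm_ring_1,'b) ser"
  shows "ser_bracket (\<lambda>w. x * c w) a = (\<lambda>w. x * ser_bracket c a w)"
  unfolding ser_bracket_def ser_mul_smul_left ser_mul_smul_right by (simp add: algebra_simps)

lemma bracket_zero_right: "ser_bracket (a::('a::comm_ring_1,'b) ser) (\<lambda>w. 0) = (\<lambda>w. 0)"
  unfolding ser_bracket_def ser_mul_zero_left ser_mul_zero_right by simp

lemma bracket_zero_left: "ser_bracket (\<lambda>w. 0) (a::('a::comm_ring_1,'b) ser) = (\<lambda>w. 0)"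
  unfolding ser_bracket_def ser_mul_zero_left ser_mul_zero_right by simp

lemma bracket_add_left:
  fixes a b c :: "('a::comm_ring_1,'b) ser"
  shows "ser_bracket (\<lambda>w. a w + b w) c = (\<lambda>w. ser_bracket a c w + ser_bracket b c w)"
  unfolding ser_bracket_def ser_mul_add_left ser_mul_add_right by (simp add: algebra_simps)

lemma bracket_add_right:
  fixes a b c :: "('a::comm_ring_1,'b) ser"
  shows "ser_bracket c (\<lambda>w. a w + b w) = (\<lambda>w. ser_bracket c a w + ser_bracket c b w)"
  unfolding ser_bracket_def ser_mul_add_left ser_mul_add_right by (simp add: algebra_simps)

lemma bracket_diff_left:
  fixes a b c :: "('a::comm_ring_1,'b) ser"
  shows "ser_bracket (\<lambda>w. a w - b w) c = (\<lambda>w. ser_bracket a c w - ser_bracket b c w)"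
  unfolding ser_bracket_def ser_mul_diff_left ser_mul_diff_right by (simp add: algebra_simps)

lemma bracket_diff_right:
  fixes a b c :: "('a::comm_ring_1,'b) ser"
  shows "ser_bracket c (\<lambda>w. a w - b w) = (\<lambda>w. ser_bracket c a w - ser_bracket c b w)"
  unfolding ser_bracket_def ser_mul_diff_left ser_mul_diff_right by (simp add: algebra_simps)

lemma bracket_self: "ser_bracket (a::('a::comm_ring_1,'b) ser) a = (\<lambda>w. 0)"
  unfolding ser_bracket_def by simp

lemma bracket_anti: "ser_bracket (a::('a::comm_ring_1,'b) ser) b = (\<lambda>w. - ser_bracket b a w)"
  unfolding ser_bracket_def by simp

lemma adw_smul: "adw u (\<lambda>w. x * c w) = (\<lambda>w. x * adw u c w)"
  by (induction u) (auto simp: bracket_smul_right)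

lemma adw_zero: "adw u (\<lambda>w. 0::'a::comm_ring_1) = (\<lambda>w. 0)"
  by (induction u) (auto simp: bracket_zero_right)

lemma adw_hl: "hl k c \<Longrightarrow> hl (length u + k) (adw u c)"
proof (induction u)
  case Nil then show ?case by simp
next
  case (Cons i u)
  show ?case using hl_br[OF hl_letter Cons.IH[OF Cons.prems]] by simp
qed

definition rw :: "'b list \<Rightarrow> ('a::comm_ring_1,'b) ser" where
  "rw u = (if u = [] then (\<lambda>w. 0) else adw (butlast u) (letter (last u)))"

lemma rw_append: "v \<noteq> [] \<Longrightarrow> rw (u@v) = adw u (rw v)"
  by (simp add: rw_def butlast_append adw_append)

lemma rw_hl: "hl (length u) (rw u)"
proof (cases "u = []")
  case True then show ?thesis by (simp add: rw_def hl_zero')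
next
  case False
  have "hl (length (butlast u) + 1) (adw (butlast u) (letter (last u)))"
    by (rule adw_hl[OF hl_letter])
  then show ?thesis using False by (simp add: rw_def)
qed

lemma finite_Wd: "finite {u::'b::finite list. length u = m}"
  using finite_lists_length_eq[OF finite_UNIV, of m] by simp

lemma sum_Wd_split:
  "(\<Sum>x\<in>{x::'b::finite list. length x = p+q}. f x) =
   (\<Sum>u\<in>{u::'b list. length u = p}. \<Sum>v\<in>{v::'b list. length v = q}. f (u@v))"
proof -
  have "(\<Sum>u\<in>{u::'b list. length u = p}. \<Sum>v\<in>{v::'b list. length v = q}. f (u@v))
      = (\<Sum>(u,v)\<in>{u::'b list. length u = p} \<times> {v::'b list. length v = q}. f (u@v))"
    by (rule sum.cartesian_product)
  also have "\<dots> = (\<Sum>x\<in>{x::'b::finite list. length x = p+q}. f x)"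
    by (rule sum.reindex_bij_witness[of _ "\<lambda>x. (take p x, drop p x)" "\<lambda>(u,v). u@v"]) auto
  finally show ?thesis by simp
qed

definition adh :: "nat \<Rightarrow> ('a::comm_ring_1,'b) ser \<Rightarrow> ('a,'b) ser \<Rightarrow> ('a,'b) ser" where
  "adh m a c = (\<lambda>w. \<Sum>u\<in>{u. length u = m}. a u * adw u c w)"

definition rh :: "nat \<Rightarrow> ('a::comm_ring_1,'b) ser \<Rightarrow> ('a,'b) ser" where
  "rh m a = (\<lambda>w. \<Sum>u\<in>{u. length u = m}. a u * rw u w)"

lemma adh_mul:
  fixes a b c :: "('a::comm_ring_1,'b::finite) ser"
  assumes "hom p a" "hom q b"
  shows "adh (p+q) (ser_mul a b) c = adh p a (adh q b c)"
proof (rule ext)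
  fix w
  have "adh (p+q) (ser_mul a b) c w =
     (\<Sum>u\<in>{u::'b list. length u = p}. \<Sum>v\<in>{v::'b list. length v = q}. ser_mul a b (u@v) * adw (u@v) c w)"
    unfolding adh_def by (rule sum_Wd_split)
  also have "\<dots> = (\<Sum>u\<in>{u::'b list. length u = p}. \<Sum>v\<in>{v::'b list. length v = q}. a u * (b v * adw u (adw v c) w))"
    by (intro sum.cong refl) (simp add: hom_mul[OF assms] adw_append)
  also have "\<dots> = adh p a (adh q b c) w"
    unfolding adh_def adw_LC by (simp add: sum_distrib_left)
  finally show "adh (p+q) (ser_mul a b) c w = adh p a (adh q b c) w" .
qed

lemma rh_mul:
  fixes a b :: "('a::comm_ring_1,'b::finite) ser"
  assumes "hom p a" "hom q b" "1 \<le> q"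
  shows "rh (p+q) (ser_mul a b) = adh p a (rh q b)"
proof (rule ext)
  fix w
  have "rh (p+q) (ser_mul a b) w =
     (\<Sum>u\<in>{u::'b list. length u = p}. \<Sum>v\<in>{v::'b list. length v = q}. ser_mul a b (u@v) * rw (u@v) w)"
    unfolding rh_def by (rule sum_Wd_split)
  also have "\<dots> = (\<Sum>u\<in>{u::'b list. length u = p}. \<Sum>v\<in>{v::'b list. length v = q}. a u * (b v * adw u (rw v) w))"
  proof (intro sum.cong refl)
    fix u v assume uv: "u \<in> {u::'b list. length u = p}" "v \<in> {v::'b list. length v = q}"
    then have "v \<noteq> []" using assms(3) by auto
    then show "ser_mul a b (u@v) * rw (u@v) w = a u * (b v * adw u (rw v) w)"
      using uv by (simp add: hom_mul[OF assms(1,2)] rw_append)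
  qed
  also have "\<dots> = adh p a (rh q b) w"
    unfolding adh_def rh_def adw_LC by (simp add: sum_distrib_left)
  finally show "rh (p+q) (ser_mul a b) w = adh p a (rh q b) w" .
qed

lemma adh_diff: "adh m (\<lambda>w. a w - b w) c = (\<lambda>w. adh m a c w - adh m b c w)"
  unfolding adh_def by (simp add: sum_subtractf left_diff_distrib)
lemma adh_add: "adh m (\<lambda>w. a w + b w) c = (\<lambda>w. adh m a c w + adh m b c w)"
  unfolding adh_def by (simp add: sum.distrib distrib_right)
lemma adh_smul: "adh m (\<lambda>w. x * a w) c = (\<lambda>w. x * adh m a c w)"
  unfolding adh_def by (simp add: sum_distrib_left mult.assoc)
lemma adh_zero: "adh m (\<lambda>w. 0) c = (\<lambda>w. 0)"
  unfolding adh_def by simp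
lemma adh_smul2: "adh m a (\<lambda>w. x * c w) = (\<lambda>w. x * adh m a c w)"
  unfolding adh_def adw_smul by (simp add: sum_distrib_left mult_ac)
lemma adh_zero2: "adh m a (\<lambda>w. 0) = (\<lambda>w. 0)"
  unfolding adh_def adw_zero by simp
lemma rh_diff: "rh m (\<lambda>w. a w - b w) = (\<lambda>w. rh m a w - rh m b w)"
  unfolding rh_def by (simp add: sum_subtractf left_diff_distrib)
lemma rh_add: "rh m (\<lambda>w. a w + b w) = (\<lambda>w. rh m a w + rh m b w)"
  unfolding rh_def by (simp add: sum.distrib distrib_right)
lemma rh_smul: "rh m (\<lambda>w. x * a w) = (\<lambda>w. x * rh m a w)"
  unfolding rh_def by (simp add: sum_distrib_left mult.assoc)
lemma rh_zero: "rh m (\<lambda>w. 0) = (\<lambda>w. 0)"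
  unfolding rh_def by simp

lemma adh_hl:
  fixes p :: "('a::comm_ring_1,'b::finite) ser"
  shows "hl n p \<Longrightarrow> adh n p c = ser_bracket p c"
proof (induction arbitrary: c rule: hl.induct)
  case (hl_letter i)
  have "adh 1 (letter i) c = (\<lambda>w. \<Sum>u\<in>{u::'b list. length u = 1}. if u = [i] then adw u c w else 0)"
    unfolding adh_def letter_def by (intro ext sum.cong refl) auto
  also have "\<dots> = adw [i] c"
    by (rule ext) (simp add: sum.delta finite_Wd)
  finally show ?case by simp
next
  case (hl_zero n)
  then show ?case unfolding ser_zero_def by (simp add: adh_zero bracket_zero_left)
next
  case (hl_add n a b)
  then show ?case unfolding ser_add_def by (simp add: adh_add bracket_add_left)
next
  case (hl_smul n a x)
  then show ?case unfolding ser_smul_def by (simp add: adh_smul bracket_smul_left)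
next
  case (hl_br p a q b)
  have ha: "hom p a" and hb: "hom q b" using hl_br.hyps by (auto intro: hl_hom)
  have "adh (p+q) (ser_bracket a b) c = (\<lambda>w. adh (p+q) (ser_mul a b) c w - adh (q+p) (ser_mul b a) c w)"
    unfolding ser_bracket_def adh_diff by (simp add: add.commute)
  also have "\<dots> = (\<lambda>w. ser_bracket a (ser_bracket b c) w - ser_bracket b (ser_bracket a c) w)"
    unfolding adh_mul[OF ha hb] adh_mul[OF hb ha] hl_br.IH ..
  also have "\<dots> = ser_bracket (ser_bracket a b) c" by (rule jacobi[symmetric])
  finally show ?case .
qed

lemma rh_hl:
  fixes p :: "('a::comm_ring_1,'b::finite) ser"
  shows "hl n p \<Longrightarrow> rh n p = (\<lambda>w. of_nat n * p w)"
proof (induction rule: hl.induct)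
  case (hl_letter i)
  have "rh 1 (letter i) = (\<lambda>w. \<Sum>u\<in>{u::'b list. length u = 1}. if u = [i] then rw u w else 0)"
    unfolding rh_def letter_def by (intro ext sum.cong refl) auto
  also have "\<dots> = rw [i]"
    by (rule ext) (simp add: sum.delta finite_Wd)
  finally show ?case by (simp add: rw_def)
next
  case (hl_zero n)
  then show ?case unfolding ser_zero_def by (simp add: rh_zero)
next
  case (hl_add n a b)
  then show ?case unfolding ser_add_def by (simp add: rh_add algebra_simps)
next
  case (hl_smul n a x)
  then show ?case unfolding ser_smul_def by (simp add: rh_smul algebra_simps)
next
  case (hl_br p a q b)
  show ?case
  proof (cases "p = 0 \<or> q = 0")
    case True
    then have "a = ser_zero \<or> b = ser_zero" using hl_0 hl_br.hyps by blast
    then have "ser_bracket a b = (\<lambda>w. 0)"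
      unfolding ser_zero_def by (auto simp: bracket_zero_left bracket_zero_right)
    then show ?thesis by (simp add: rh_zero)
  next
    case False
    have ha: "hom p a" and hb: "hom q b" using hl_br.hyps by (auto intro: hl_hom)
    have "rh (p+q) (ser_bracket a b) = (\<lambda>w. rh (p+q) (ser_mul a b) w - rh (q+p) (ser_mul b a) w)"
      unfolding ser_bracket_def rh_diff by (simp add: add.commute)
    also have "\<dots> = (\<lambda>w. ser_bracket a (\<lambda>w. of_nat q * b w) w - ser_bracket b (\<lambda>w. of_nat p * a w) w)"
    proof -
      have "rh (p+q) (ser_mul a b) = adh p a (rh q b)" using rh_mul[OF ha hb] False by simp
      moreover have "rh (q+p) (ser_mul b a) = adh q b (rh p a)" using rh_mul[OF hb ha] False by simp
      ultimately show ?thesis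
        by (simp add: hl_br.IH adh_hl[OF hl_br.hyps(1)] adh_hl[OF hl_br.hyps(2)])
    qed
    also have "\<dots> = (\<lambda>w. of_nat (p+q) * ser_bracket a b w)"
      unfolding bracket_smul_right by (subst (2) bracket_anti) (simp add: algebra_simps)
    finally show ?thesis .
  qed
qed

lemma ser_pow_0: "ser_pow z 0 = ser_one" by (simp add: ser_pow_def)
lemma ser_pow_Suc: "ser_pow z (Suc k) = ser_mul z (ser_pow z k)" by (simp add: ser_pow_def)

lemma hom_one: "hom 0 ser_one" by (simp add: hom_def ser_one_def)

lemma one_mul: "ser_mul ser_one (a::('a::comm_ring_1,'b) ser) = a"
  by (rule ext, subst hom_mul_left[OF hom_one]) (simp add: ser_one_def)

lemma mul_one: "ser_mul (a::('a::comm_ring_1,'b) ser) ser_one = a"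
  by (rule ext, subst hom_mul_right[OF hom_one]) (simp add: ser_one_def)

lemma hom_pow: "hom d (z::('a::comm_ring_1,'b) ser) \<Longrightarrow> hom (k*d) (ser_pow z k)"
proof (induction k)
  case 0 then show ?case by (simp add: ser_pow_0 hom_one)
next
  case (Suc k) then show ?case using hom_mul_hom[OF Suc.prems Suc.IH[OF Suc.prems]]
    by (simp add: ser_pow_Suc)
qed

lemma pow_comm: "ser_mul (ser_pow z k) z = ser_mul (z::('a::comm_ring_1,'b) ser) (ser_pow z k)"
proof (induction k)
  case 0 then show ?case by (simp add: ser_pow_0 one_mul mul_one)
next
  case (Suc k) then show ?case by (simp add: ser_pow_Suc ser_mul_assoc)
qed

lemma ser_pow_Suc': "ser_pow z (Suc k) = ser_mul (ser_pow z k) (z::('a::comm_ring_1,'b) ser)"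
  by (simp add: ser_pow_Suc pow_comm)

lemma concat_rep_snoc: "concat (replicate j v) @ v = v @ concat (replicate j v)"
  by (induction j) auto

lemma centralizer:
  fixes z e :: "('a::field_char_0,'b) ser"
  assumes hz: "hom d z" and d1: "1 \<le> d" and v0: "length v0 = d" "z v0 \<noteq> 0"
  and dcase: "d = 1 \<or> (d = 2 \<and> (\<forall>i j. z [i,j] = - z [j,i]))"
  and he: "hom m e" and comm: "ser_mul z e = ser_mul e z"
  shows "\<exists>c. \<forall>w. e w = (if d dvd m then c * ser_pow z (m div d) w else 0)"
proof -
  define g where "g = z v0"
  have g0: "g \<noteq> 0" using v0 g_def by simp
  define P where "P j = concat (replicate j v0)" for j
  have lenP: "length (P j) = j * d" for j by (simp add: P_def length_concat v0 sum_list_replicate)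
  have R: "z (take d w) * e (drop d w) = e (take m w) * z (drop m w)" if "length w = m + d" for w
  proof -
    have "ser_mul z e w = ser_mul e z w" using comm by simp
    then show ?thesis using that d1 by (simp add: hom_mul_left[OF hz] hom_mul_right[OF hz])
  qed
  have FP: "e u * g = z (take d u) * e (drop d u @ v0)" if "length u = m" "d \<le> m" for u
    using R[of "u @ v0"] that v0 by (simp add: g_def)
  have iter: "e u * g ^ j = ser_pow z j (take (j*d) u) * e (drop (j*d) u @ P j)"
    if "j * d \<le> m" "length u = m" for j u
    using that
  proof (induction j)
    case 0 then show ?case by (simp add: ser_pow_0 ser_one_def P_def)
  next
    case (Suc j)
    have IH: "e u * g ^ j = ser_pow z j (take (j*d) u) * e (drop (j*d) u @ P j)"
      using Suc by simp
    define x where "x = drop (j*d) u @ P j"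
    have lx: "length x = m" using Suc.prems lenP by (simp add: x_def)
    have ld: "d \<le> length (drop (j*d) u)" using Suc.prems by simp
    have "e x * g = z (take d x) * e (drop d x @ v0)"
      using FP[OF lx] Suc.prems by simp
    also have "take d x = take d (drop (j*d) u)" using ld by (simp add: x_def)
    also have "drop d x @ v0 = drop (Suc j * d) u @ P (Suc j)"
      using ld by (simp add: x_def P_def concat_rep_snoc add.commute)
    finally have ex: "e x * g = z (take d (drop (j*d) u)) * e (drop (Suc j * d) u @ P (Suc j))" .
    have "ser_pow z (Suc j) (take (Suc j * d) u) = ser_mul (ser_pow z j) z (take (Suc j * d) u)"
      by (simp add: ser_pow_Suc')
    also have "\<dots> = ser_pow z j (take (j*d) u) * z (take d (drop (j*d) u))"
      using Suc.prems by (simp add: hom_mul_right[OF hz] take_drop min_def add.commute)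
    finally have pw: "ser_pow z (Suc j) (take (Suc j * d) u) = ser_pow z j (take (j*d) u) * z (take d (drop (j*d) u))" .
    have "e u * g ^ Suc j = (e u * g ^ j) * g" by (simp add: mult_ac)
    also have "\<dots> = ser_pow z j (take (j*d) u) * (e x * g)" by (simp add: IH x_def mult_ac)
    also have "\<dots> = ser_pow z (Suc j) (take (Suc j * d) u) * e (drop (Suc j * d) u @ P (Suc j))"
      unfolding ex pw by (simp add: mult_ac)
    finally show ?case .
  qed
  show ?thesis
  proof (cases "d dvd m")
    case True
    define j where "j = m div d"
    have jd: "j * d = m" using True by (simp add: j_def)
    define c where "c = e (P j) / g ^ j"
    have "e w = c * ser_pow z j w" for w
    proof (cases "length w = m")
      case True
      have "e w * g ^ j = ser_pow z j w * e (P j)" using iter[of j w] jd True by simp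
      then show ?thesis using g0 by (simp add: c_def field_simps)
    next
      case False
      then show ?thesis using he hom_pow[OF hz, of j] jd by (simp add: hom_def)
    qed
    then show ?thesis using True j_def by auto
  next
    case False
    then have d2: "d = 2" and anti: "\<forall>i j. z [i,j] = - z [j,i]" using dcase by auto
    obtain k0 rest where kr: "v0 = k0 # rest" using v0 d2 by (cases v0) auto
    have lr: "length rest = 1" using kr v0(1) d2 by simp
    then obtain l0 where "rest = [l0]" by (cases rest) auto
    then have kl: "v0 = [k0, l0]" using kr by simp
    have zlk: "z [l0, k0] = - g" using anti[rule_format, of l0 k0] kl g_def by simp
    define j where "j = m div 2"
    have nd: "\<not> 2 dvd m" using False d2 by simp
    then have jm: "j * 2 + 1 = m" unfolding j_def by presburger
    have key: "e (t # P j) = 0" for t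
    proof (cases "j = 0")
      case True
      then have m1: "m = 1" using jm by simp
      have "z [k0,l0] * e [k0] = e [k0] * z [l0,k0]" using R[of "[k0,l0,k0]"] m1 d2 by simp
      then have "e [k0] = 0" using zlk g0 kl g_def by simp
      moreover have "z [k0,l0] * e [t] = e [k0] * z [l0,t]" using R[of "[k0,l0,t]"] m1 d2 by simp
      ultimately show ?thesis using True g0 kl g_def by (simp add: P_def)
    next
      case False
      then obtain j' where j': "j = Suc j'" by (cases j) auto
      have PS: "P j = k0 # l0 # P j'" by (simp add: P_def j' kl)
      have PS2: "P j' @ v0 = P j" by (simp add: P_def j' concat_rep_snoc)
      have fp: "e (t # P j) * g = z [t, k0] * e (l0 # P j)" for t
      proof -
        have "length (t # P j) = m" using lenP[of j] jm d2 by simp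
        then have "e (t # P j) * g = z (take 2 (t # P j)) * e (drop 2 (t # P j) @ v0)"
          using FP[of "t # P j"] jm d2 \<open>j \<noteq> 0\<close> by simp
        then show ?thesis using PS PS2 by simp
      qed
      have "e (l0 # P j) = 0" using fp[of l0] zlk g0 by simp
      then show ?thesis using fp[of t] g0 by simp
    qed
    have "e w = 0" for w
    proof (cases "length w = m")
      case True
      have l1: "length (drop (j*2) w) = 1" using True jm by simp
      then obtain t where "drop (j*2) w = [t]" by (cases "drop (j*2) w") auto
      then have "e w * g ^ j = 0" using iter[of j w] jm d2 True key by simp
      then show ?thesis using g0 by simp
    next
      case False then show ?thesis using he by (simp add: hom_def)
    qed
    then show ?thesis using \<open>\<not> d dvd m\<close> by auto
  qed
qed

lemma rh_pow_zero:
  fixes z :: "('a::comm_ring_1,'b::finite) ser"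
  assumes hlz: "hl d z" and d1: "1 \<le> d" and k2: "2 \<le> k"
  shows "rh (k*d) (ser_pow z k) = (\<lambda>w. 0)"
proof -
  have hz: "hom d z" using hl_hom[OF hlz] .
  obtain j where kj: "k = Suc (Suc j)" using k2 by (metis add_2_eq_Suc le_Suc_ex)
  have "adh (j*d + d) (ser_mul (ser_pow z j) z) z = adh (j*d) (ser_pow z j) (adh d z z)"
    by (rule adh_mul[OF hom_pow[OF hz] hz])
  also have "\<dots> = (\<lambda>w. 0)" by (simp add: adh_hl[OF hlz] bracket_self adh_zero2)
  finally have A: "adh (Suc j * d) (ser_pow z (Suc j)) z = (\<lambda>w. 0)"
    by (simp add: ser_pow_Suc'[of z j] add.commute)
  have "rh (Suc j * d + d) (ser_mul (ser_pow z (Suc j)) z) = adh (Suc j * d) (ser_pow z (Suc j)) (rh d z)"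
    by (rule rh_mul[OF hom_pow[OF hz] hz d1])
  also have "\<dots> = (\<lambda>w. 0)" unfolding rh_hl[OF hlz] adh_smul2 A by simp
  finally show ?thesis using kj by (simp add: ser_pow_Suc'[of z "Suc j"] add.commute)
qed

lemma main_hom:
  fixes z a :: "('a::field_char_0,'b::finite) ser"
  assumes hlz: "hl d z" and d1: "1 \<le> d" and v0: "length v0 = d" "z v0 \<noteq> 0"
  and dcase: "d = 1 \<or> (d = 2 \<and> (\<forall>i j. z [i,j] = - z [j,i]))"
  and ha: "hom m a" and m1: "1 \<le> m" and hb: "hl (m+d) (ser_bracket z a)"
  shows "\<exists>c. \<forall>w. a w = rh m a w / of_nat m + (if d dvd m then c * ser_pow z (m div d) w else 0)"
proof -
  have hz: "hom d z" using hl_hom[OF hlz] .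
  define b where "b = ser_bracket z a"
  define \<psi> where "\<psi> = adh m a z"
  have i: "rh (m+d) b = (\<lambda>w. of_nat (m+d) * b w)" using rh_hl[OF hb] b_def by simp
  have "rh (m+d) b = (\<lambda>w. rh (d+m) (ser_mul z a) w - rh (m+d) (ser_mul a z) w)"
    unfolding b_def ser_bracket_def rh_diff by (simp add: add.commute)
  also have "rh (d+m) (ser_mul z a) = ser_bracket z (rh m a)"
    using rh_mul[OF hz ha m1] adh_hl[OF hlz] by simp
  also have "rh (m+d) (ser_mul a z) = (\<lambda>w. of_nat d * \<psi> w)"
    using rh_mul[OF ha hz d1] by (simp add: rh_hl[OF hlz] adh_smul2 \<psi>_def)
  finally have ii: "rh (m+d) b = (\<lambda>w. ser_bracket z (rh m a) w - of_nat d * \<psi> w)" .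
  have "ser_bracket b z = adh (m+d) b z" using adh_hl[OF hb] b_def by simp
  also have "\<dots> = (\<lambda>w. adh (d+m) (ser_mul z a) z w - adh (m+d) (ser_mul a z) z w)"
    unfolding b_def ser_bracket_def adh_diff by (simp add: add.commute)
  also have "\<dots> = (\<lambda>w. adh d z (adh m a z) w - adh m a (adh d z z) w)"
    unfolding adh_mul[OF hz ha] adh_mul[OF ha hz] ..
  also have "\<dots> = ser_bracket z \<psi>"
    by (simp add: adh_hl[OF hlz] bracket_self adh_zero2 \<psi>_def)
  finally have iii: "ser_bracket b z = ser_bracket z \<psi>" .
  define e where "e = (\<lambda>w. \<psi> w + b w)"
  have hl\<psi>: "hl (m+d) \<psi>" unfolding \<psi>_def adh_def
    by (rule hl_LC[OF finite_Wd]) (use adw_hl[OF hlz] in auto)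
  have hle: "hl (m+d) e" using hl_add[OF hl\<psi> hb] by (simp add: e_def ser_add_def b_def)
  have "ser_bracket z e = (\<lambda>w. ser_bracket b z w + ser_bracket z b w)"
    unfolding e_def bracket_add_right iii ..
  also have "\<dots> = (\<lambda>w. 0)" by (subst bracket_anti) simp
  finally have ze: "ser_bracket z e = (\<lambda>w. 0)" .
  then have comm: "ser_mul z e = ser_mul e z"
  proof -
    assume H: "ser_bracket z e = (\<lambda>w. 0)"
    have "ser_mul z e w - ser_mul e z w = 0" for w using fun_cong[OF H, of w] by (simp add: ser_bracket_def)
    then show ?thesis by (intro ext) simp
  qed
  obtain c where c: "\<forall>w. e w = (if d dvd (m+d) then c * ser_pow z ((m+d) div d) w else 0)"
    using centralizer[OF hz d1 v0 dcase hl_hom[OF hle] comm] by blast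
  have e0: "e w = 0" for w
  proof (cases "d dvd (m+d)")
    case True
    define k where "k = (m+d) div d"
    have kd: "k * d = m + d" using True unfolding k_def by (rule dvd_div_mult_self)
    have k2: "2 \<le> k"
    proof (rule ccontr)
      assume "\<not> 2 \<le> k"
      then have "k \<le> 1" by simp
      then have "k * d \<le> d" using mult_le_mono1[of k 1 d] by simp
      then show False using kd m1 by simp
    qed
    have eq: "e = (\<lambda>w. c * ser_pow z k w)" using c True by (auto simp: k_def)
    have "rh (m+d) e = (\<lambda>w. c * rh (k*d) (ser_pow z k) w)" using kd eq by (simp add: rh_smul)
    also have "\<dots> = (\<lambda>w. 0)" using rh_pow_zero[OF hlz d1 k2] by simp
    finally have "(\<lambda>w. of_nat (m+d) * e w) = (\<lambda>w. 0)" using rh_hl[OF hle] by simp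
    then have "(\<lambda>w. of_nat (m+d) * e w) w = (\<lambda>w. 0) w" by (rule fun_cong)
    then have "of_nat (m+d) * e w = 0" by (simp only:)
    moreover have "(of_nat (m+d)::'a) \<noteq> 0" using m1 by (subst of_nat_eq_0_iff) simp
    ultimately show ?thesis by (metis mult_eq_0_iff)
  next
    case False then show ?thesis using c by simp
  qed
  have \<psi>b: "\<psi> w = - b w" for w using e0[of w] by (simp add: e_def eq_neg_iff_add_eq_0)
  have vi: "of_nat m * b w = ser_bracket z (rh m a) w" for w
  proof -
    have "of_nat (m+d) * b w = ser_bracket z (rh m a) w - of_nat d * \<psi> w"
      using fun_cong[OF i, of w] fun_cong[OF ii, of w] by simp
    then show ?thesis using \<psi>b[of w] by (simp add: algebra_simps)
  qed
  define f where "f = (\<lambda>w. of_nat m * a w - rh m a w)"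
  have hlr: "hl m (rh m a)" unfolding rh_def
    by (rule hl_LC[OF finite_Wd]) (use rw_hl in auto)
  have hf: "hom m f" using ha hl_hom[OF hlr] by (simp add: hom_def f_def)
  have "ser_bracket z f = (\<lambda>w. of_nat m * b w - ser_bracket z (rh m a) w)"
    unfolding f_def bracket_diff_right bracket_smul_right b_def ..
  also have "\<dots> = (\<lambda>w. 0)" using vi by simp
  finally have "ser_bracket z f = (\<lambda>w. 0)" .
  then have commf: "ser_mul z f = ser_mul f z"
  proof -
    assume H: "ser_bracket z f = (\<lambda>w. 0)"
    have "ser_mul z f w - ser_mul f z w = 0" for w using fun_cong[OF H, of w] by (simp add: ser_bracket_def)
    then show ?thesis by (intro ext) simp
  qed
  obtain c' where c': "\<forall>w. f w = (if d dvd m then c' * ser_pow z (m div d) w else 0)"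
    using centralizer[OF hz d1 v0 dcase hf commf] by blast
  have "a w = rh m a w / of_nat m + (if d dvd m then (c' / of_nat m) * ser_pow z (m div d) w else 0)" for w
  proof -
    have "of_nat m * a w = rh m a w + f w" by (simp add: f_def)
    then show ?thesis using c'[rule_format, of w] m1 by (auto simp: field_simps)
  qed
  then show ?thesis by blast
qed

lemma hl_rh: "hl m (rh m (a::('a::comm_ring_1,'b::finite) ser))"
  unfolding rh_def by (rule hl_LC[OF finite_Wd]) (use rw_hl in auto)

lemma homog_bracket_z:
  fixes z a :: "('a::comm_ring_1,'b) ser"
  assumes hz: "hom d z"
  shows "homog (m+d) (ser_bracket z a) = ser_bracket z (homog m a)"
proof (rule ext)
  fix w :: "'b list"
  show "homog (m+d) (ser_bracket z a) w = ser_bracket z (homog m a) w"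
    unfolding ser_bracket_def homog_def hom_mul_left[OF hz] hom_mul_right[OF hz]
    by auto
qed

lemma homog_bracket_small:
  fixes z a :: "('a::comm_ring_1,'b) ser"
  assumes hz: "hom d z" and "n < d"
  shows "homog n (ser_bracket z a) = ser_zero"
proof (rule ext)
  fix w :: "'b list"
  show "homog n (ser_bracket z a) w = ser_zero w"
    unfolding ser_bracket_def homog_def hom_mul_left[OF hz] hom_mul_right[OF hz] ser_zero_def
    using assms(2) by auto
qed

lemma homog_idem: "homog n (homog n a) = homog n a"
  by (auto simp: homog_def)

lemma mul_letters:
  "ser_mul (letter i) (letter j) w = (if w = [i,j] then (1::'a::comm_ring_1) else 0)"
proof -
  have h1: "hom 1 (letter k :: ('a,'b) ser)" for k by (auto simp: hom_def letter_def)
  show ?thesis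
  proof (cases "length w = 2")
    case True
    then obtain x y where "w = [x,y]"
      by (metis One_nat_def Suc_1 length_0_conv length_Suc_conv)
    then show ?thesis by (subst hom_mul[OF h1 h1]) (auto simp: letter_def)
  next
    case False
    then show ?thesis by (subst hom_mul[OF h1 h1]) auto
  qed
qed

lemma double_delta:
  fixes h :: "'b::finite \<Rightarrow> 'b \<Rightarrow> 'a::comm_ring_1"
  shows "(\<Sum>i\<in>UNIV. \<Sum>j\<in>UNIV. h i j * (if [a,b] = [i,j] then 1 else 0)) = h a b"
proof -
  have "(\<Sum>j\<in>UNIV. h i j * (if [a,b] = [i,j] then 1 else 0)) = (if i = a then h i b else 0)" for i
  proof (cases "i = a")
    case True
    have "(\<Sum>j\<in>UNIV. h i j * (if [a,b] = [i,j] then 1 else 0)) = (\<Sum>j\<in>UNIV. if j = b then h i j else 0)"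
      using True by (intro sum.cong) auto
    then show ?thesis using True by (simp only: sum.delta finite_UNIV) simp
  next
    case False then show ?thesis by simp
  qed
  then have "(\<Sum>i\<in>UNIV. \<Sum>j\<in>UNIV. h i j * (if [a,b] = [i,j] then 1 else 0)) = (\<Sum>i\<in>UNIV. if i = a then h i b else 0)"
    by (intro sum.cong) auto
  then show ?thesis by (simp only: sum.delta finite_UNIV) simp
qed

lemma z_data:
  fixes z :: "('a::field_char_0,'b::finite) ser"
  assumes "nonzero_in_V z \<or> nonzero_in_wedge2 z"
  shows "\<exists>d v0. hl d z \<and> 1 \<le> d \<and> length v0 = d \<and> z v0 \<noteq> 0 \<and>
           (d = 1 \<or> (d = 2 \<and> (\<forall>i j. z [i,j] = - z [j,i])))"
proof (cases "nonzero_in_V z")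
  case True
  then have hz: "\<forall>w. length w \<noteq> 1 \<longrightarrow> z w = 0" and nz: "z \<noteq> ser_zero"
    by (auto simp: nonzero_in_V_def)
  obtain v0 where v0: "z v0 \<noteq> 0" using nz by (auto simp: ser_zero_def)
  then have lv: "length v0 = 1" using hz by auto
  have "z = (\<lambda>w. \<Sum>i\<in>UNIV. z [i] * letter i w)"
  proof (rule ext)
    fix w :: "'b list"
    show "z w = (\<Sum>i\<in>UNIV. z [i] * letter i w)"
    proof (cases "length w = 1")
      case True
      then obtain k where "w = [k]" by (metis One_nat_def length_0_conv length_Suc_conv)
      then show ?thesis by (simp add: letter_def if_distrib[of "\<lambda>t. _ * t"] sum.delta' cong: if_cong)
    next
      case False
      then show ?thesis using hz by (auto simp: letter_def intro!: sum.neutral)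
    qed
  qed
  moreover have "hl 1 (\<lambda>w. \<Sum>i\<in>UNIV. z [i] * letter i w)"
    by (rule hl_LC) (simp, rule hl_letter)
  ultimately have "hl 1 z" by simp
  then show ?thesis using v0 lv by blast
next
  case False
  then have W: "nonzero_in_wedge2 z" using assms by blast
  then have W': "(\<forall>w. length w \<noteq> 2 \<longrightarrow> z w = 0) \<and> (\<forall>i j. z [i,j] = - z [j,i]) \<and> z \<noteq> ser_zero"
    unfolding nonzero_in_wedge2_def .
  then have hz: "\<forall>w. length w \<noteq> 2 \<longrightarrow> z w = 0" and anti: "\<forall>i j. z [i,j] = - z [j,i]"
    and nz: "z \<noteq> ser_zero" by blast+
  obtain v0 where v0: "z v0 \<noteq> 0" using nz by (auto simp: ser_zero_def)
  then have lv: "length v0 = 2" using hz by auto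
  define F where "F = (\<lambda>w. \<Sum>i\<in>UNIV. \<Sum>j\<in>UNIV. (z [i,j] / 2) * ser_bracket (letter i) (letter j) w)"
  have "z = F"
  proof (rule ext)
    fix w :: "'b list"
    have F': "F w = (\<Sum>i\<in>UNIV. \<Sum>j\<in>UNIV. (z [i,j] / 2) * (if w = [i,j] then 1 else 0))
                  - (\<Sum>i\<in>UNIV. \<Sum>j\<in>UNIV. (z [i,j] / 2) * (if w = [j,i] then 1 else 0))"
      unfolding F_def ser_bracket_def mul_letters by (simp add: sum_subtractf right_diff_distrib)
    show "z w = F w"
    proof (cases "length w = 2")
      case True
      then obtain x y where w: "w = [x,y]"
        by (metis One_nat_def Suc_1 length_0_conv length_Suc_conv)
      have s1: "(\<Sum>i\<in>UNIV. \<Sum>j\<in>UNIV. (z [i,j] / 2) * (if w = [i,j] then 1 else 0)) = z [x,y] / 2"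
        unfolding w by (rule double_delta)
      have s2: "(\<Sum>i\<in>UNIV. \<Sum>j\<in>UNIV. (z [i,j] / 2) * (if w = [j,i] then 1 else 0)) = z [y,x] / 2"
      proof -
        have "(\<Sum>i\<in>UNIV. \<Sum>j\<in>UNIV. (z [i,j] / 2) * (if w = [j,i] then 1 else 0))
            = (\<Sum>j\<in>UNIV. \<Sum>i\<in>UNIV. (z [i,j] / 2) * (if [x,y] = [j,i] then 1 else 0))"
          unfolding w by (rule sum.swap)
        also have "\<dots> = z [y,x] / 2"
          by (rule double_delta[where h = "\<lambda>j i. z [i,j] / 2"])
        finally show ?thesis .
      qed
      have zyx: "z [y,x] = - z [x,y]" using anti[rule_format, of y x] by simp
      have "F w = z [x,y] / 2 - z [y,x] / 2" using F' unfolding s1 s2 .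
      then have "F w = z [x,y]" unfolding zyx by (simp add: field_simps)
      then show ?thesis using w by simp
    next
      case False
      then have nw: "\<And>i j. w \<noteq> [i,j]" by auto
      show ?thesis using F' hz False by (simp add: nw)
    qed
  qed
  moreover have "hl 2 F"
    unfolding F_def
    by (rule hl_sum, simp, rule hl_LC, simp) (use hl_br[OF hl_letter hl_letter] in \<open>simp only: one_add_one\<close>)
  ultimately have "hl 2 z" by simp
  moreover have "(1::nat) \<le> 2" by simp
  ultimately show ?thesis using v0 lv anti by blast
qed

theorem lemma3p7:
  fixes z :: "('a::field_char_0, 'b::finite) ser"
  assumes "nonzero_in_V z \<or> nonzero_in_wedge2 z"
  shows "{a. ser_bracket z a \<in> Lhat} =
         {ser_add l p | l p. l \<in> Lhat \<and> p \<in> power_series_in z}"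
proof -
  obtain d v0 where hlz: "hl d z" and d1: "1 \<le> d" and v0: "length v0 = d" "z v0 \<noteq> 0"
    and dcase: "d = 1 \<or> (d = 2 \<and> (\<forall>i j. z [i,j] = - z [j,i]))"
    using z_data[OF assms] by blast
  have hz: "hom d z" using hl_hom[OF hlz] .
  have zlie: "z \<in> lie_polys" using hl_lie[OF hlz] .
  have pscomm: "ser_bracket z p = (\<lambda>w. 0)" if pin0: "p \<in> power_series_in z" for p
  proof -
    obtain c where p: "p = (\<lambda>w. \<Sum>k\<le>length w. c k * ser_pow z k w)"
      using pin0 unfolding power_series_in_def by blast
    have "ser_mul z p w = ser_mul p z w" for w
    proof (cases "d \<le> length w")
      case True
      have "ser_mul z p w = (\<Sum>k\<le>length w - d. c k * ser_mul z (ser_pow z k) w)"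
        using True by (simp add: hom_mul_left[OF hz] p sum_distrib_left mult_ac)
      also have "\<dots> = (\<Sum>k\<le>length w - d. c k * ser_mul (ser_pow z k) z w)" by (simp add: pow_comm)
      also have "\<dots> = ser_mul p z w"
        using True by (simp add: hom_mul_right[OF hz] p sum_distrib_left sum_distrib_right mult_ac)
      finally show ?thesis .
    next
      case False then show ?thesis by (simp add: hom_mul_left[OF hz] hom_mul_right[OF hz])
    qed
    then show ?thesis unfolding ser_bracket_def by auto
  qed
  show ?thesis
  proof (rule set_eqI, rule iffI)
    fix a assume "a \<in> {a. ser_bracket z a \<in> Lhat}"
    then have aL: "ser_bracket z a \<in> Lhat" by simp
    have "\<exists>c. 1 \<le> m \<longrightarrow> (\<forall>w. homog m a w = rh m (homog m a) w / of_nat m +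
              (if d dvd m then c * ser_pow z (m div d) w else 0))" for m
    proof (cases "1 \<le> m")
      case True
      have "homog (m+d) (ser_bracket z a) \<in> lie_polys" using aL by (simp add: Lhat_def)
      from lie_homog[OF this, of "m+d"]
      have hb: "hl (m+d) (ser_bracket z (homog m a))"
        by (simp add: homog_idem homog_bracket_z[OF hz])
      show ?thesis using main_hom[OF hlz d1 v0 dcase hom_homog True hb] by blast
    qed simp
    then obtain C where C: "\<And>m. 1 \<le> m \<Longrightarrow> (\<forall>w. homog m a w = rh m (homog m a) w / of_nat m +
              (if d dvd m then C m * ser_pow z (m div d) w else 0))"
      by metis
    define l where "l = (\<lambda>w. if length w = 0 then 0 else rh (length w) (homog (length w) a) w / of_nat (length w))"
    define cc where "cc k = (if k = 0 then a [] else C (k*d))" for k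
    define p where "p = (\<lambda>w. \<Sum>k\<le>length w. cc k * ser_pow z k w)"
    have pin: "p \<in> power_series_in z" unfolding power_series_in_def p_def by blast
    have pval: "p w = (if d dvd length w then cc (length w div d) * ser_pow z (length w div d) w else 0)" for w
    proof -
      have "p w = (\<Sum>k\<le>length w. if k = length w div d then
                      (if d dvd length w then cc k * ser_pow z k w else 0) else 0)"
        unfolding p_def
      proof (intro sum.cong refl)
        fix k assume "k \<in> {..length w}"
        show "cc k * ser_pow z k w = (if k = length w div d then
                      (if d dvd length w then cc k * ser_pow z k w else 0) else 0)"
        proof (cases "length w = k * d")
          case True
          then have "d dvd length w" "k = length w div d" using d1 by auto
          then show ?thesis by simp
        next
          case False
          then have "ser_pow z k w = 0" using hom_pow[OF hz, of k] by (simp add: hom_def)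
          then show ?thesis by (cases "k = length w div d") auto
        qed
      qed
      also have "\<dots> = (if d dvd length w then cc (length w div d) * ser_pow z (length w div d) w else 0)"
        by (simp add: sum.delta)
      finally show ?thesis .
    qed
    have aeq: "a = ser_add l p"
    proof (rule ext)
      fix w :: "'b list"
      show "a w = ser_add l p w"
      proof (cases "length w = 0")
        case True
        then have "w = []" by simp
        then show ?thesis using pval[of w]
          by (simp add: ser_add_def l_def cc_def ser_pow_0 ser_one_def)
      next
        case False
        define n where "n = length w"
        have n1: "1 \<le> n" using False n_def by (simp add: Suc_le_eq)
        have "a w = homog n a w" by (simp add: homog_def n_def)
        also have "\<dots> = rh n (homog n a) w / of_nat n + (if d dvd n then C n * ser_pow z (n div d) w else 0)"
          using C[OF n1] by blast
        also have "\<dots> = ser_add l p w"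
        proof (cases "d dvd n")
          case True
          have "n div d \<noteq> 0" using True n1 d1 by (auto elim!: dvdE)
          then have "cc (n div d) = C n" using True by (simp add: cc_def)
          then show ?thesis using True pval[of w] False by (simp add: ser_add_def l_def n_def)
        next
          case False
          then show ?thesis using pval[of w] \<open>length w \<noteq> 0\<close> by (simp add: ser_add_def l_def n_def)
        qed
        finally show ?thesis .
      qed
    qed
    have lL: "l \<in> Lhat"
      unfolding Lhat_def
    proof (rule CollectI, rule allI)
      fix n
      show "homog n l \<in> lie_polys"
      proof (cases "n = 0")
        case True
        have "homog n l = ser_zero" using True by (auto simp: homog_def l_def ser_zero_def)
        then show ?thesis by (simp add: lie_polys.lp_zero)
      next
        case False
        have "homog n l = ser_smul (1 / of_nat n) (rh n (homog n a))"
        proof (rule ext)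
          fix w :: "'b list"
          have "hom n (rh n (homog n a))" using hl_hom[OF hl_rh] .
          then show "homog n l w = ser_smul (1 / of_nat n) (rh n (homog n a)) w"
            using False by (auto simp: homog_def l_def ser_smul_def hom_def)
        qed
        then show ?thesis using hl_lie[OF hl_smul[OF hl_rh]] by simp
      qed
    qed
    show "a \<in> {ser_add l p | l p. l \<in> Lhat \<and> p \<in> power_series_in z}"
      using aeq lL pin by blast
  next
    fix a assume "a \<in> {ser_add l p | l p. l \<in> Lhat \<and> p \<in> power_series_in z}"
    then obtain l p where a: "a = ser_add l p" and lL: "l \<in> Lhat" and pin: "p \<in> power_series_in z"
      by blast
    have "ser_bracket z a = (\<lambda>w. ser_bracket z l w + ser_bracket z p w)"
      unfolding a ser_add_def bracket_add_right ..
    also have "\<dots> = ser_bracket z l" using pscomm[OF pin] by simp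
    finally have za: "ser_bracket z a = ser_bracket z l" .
    have "homog n (ser_bracket z l) \<in> lie_polys" for n
    proof (cases "d \<le> n")
      case True
      then have "homog n (ser_bracket z l) = ser_bracket z (homog (n-d) l)"
        using homog_bracket_z[OF hz, of "n-d" l] by simp
      moreover have "homog (n-d) l \<in> lie_polys" using lL by (simp add: Lhat_def)
      ultimately show ?thesis using zlie by (simp add: lie_polys.lp_bracket)
    next
      case False
      then show ?thesis using homog_bracket_small[OF hz, of n l] by (simp add: lie_polys.lp_zero)
    qed
    then show "a \<in> {a. ser_bracket z a \<in> Lhat}" using za by (simp add: Lhat_def)
  qed
qed

end
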